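(* Let $f\in\mathbb{Z}_2[x]$, $n\ge2$, and let $\sigma$ be a weakly splitting cycle of $f_n$. Then one of the two lifts of $\sigma$ is again weakly splitting, and the other lift weakly grows and its (unique) lift strongly splits.
   Context: $f_n$ is the induced map on $\mathbb{Z}/2^n\mathbb{Z}$, $f_n(x\bmod 2^n)=f(x)\bmod 2^n$. A $k$-cycle of $f_n$ is a tuple $\sigma=(x_1,\dots,x_k)$ of distinct elements with $f_n(x_i)=x_{i+1}$, $f_n(x_k)=x_1$; its lifts are the cycles of $f_{n+1}$ in $\{y\in\mathbb{Z}/2^{n+1}\mathbb{Z}:y\bmod 2^n\in\sigma\}$. For a $k$-cycle at level $n$ and a representative $x\in\mathbb{Z}_2$ of one of its points, $a_n=(f^k)'(x)$, $b_n=(f^k(x)-x)/2^n$. A cycle strongly grows if $a_n\equiv1\pmod4$, $b_n$ odd; weakly grows if $a_n\equiv3\pmod4$, $b_n$ odd; strongly splits if $a_n\equiv1\pmod4$, $b_n$ even; weakly splits if $a_n\equiv3\pmod4$, $b_n$ even (independent of the representative). *)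

theory Defs
  imports "HOL-Computational_Algebra.Polynomial"
begin

text \<open>A 2-adic integer is represented by its compatible sequence of residues:
  the m-th entry is its reduction modulo 2^m, taken in {0..<2^m}.\<close>

typedef padic2 = "{x :: nat \<Rightarrow> int. \<forall>m. x m \<in> {0..<2^m} \<and> x (Suc m) mod 2^m = x m}"
  morphisms digits Abs_padic2
  by (rule exI[of _ "\<lambda>_. 0"]) auto
setup_lifting type_definition_padic2
lemma mod_Suc_pow2: "(a::int) mod 2^Suc m mod 2^m = a mod 2^m"
  by (rule mod_mod_cancel) simp
lemma digits_range: "digits x m \<in> {0..<2^m}"
  using digits[of x] by auto
lemma digits_mod [simp]: "digits x m mod 2^m = digits x m"
  using digits_range[of x m] by auto
lemma digits_0 [simp]: "digits x 0 = 0"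
  using digits_range[of x 0] by simp
lemma digits_Suc: "digits x (Suc m) mod 2^m = digits x m"
  using digits[of x] by auto

instantiation padic2 :: comm_ring_1
begin
lift_definition zero_padic2 :: padic2 is "\<lambda>m. 0" by simp
lift_definition one_padic2 :: padic2 is "\<lambda>m. 1 mod 2^m"
  apply (intro allI conjI)
  apply simp
  by (simp only: mod_Suc_pow2)
lift_definition plus_padic2 :: "padic2 \<Rightarrow> padic2 \<Rightarrow> padic2"
  is "\<lambda>x y m. (x m + y m) mod 2^m"
  apply (intro allI conjI)
  apply simp
  apply (simp only: mod_Suc_pow2)
  by (metis mod_add_eq)
lift_definition uminus_padic2 :: "padic2 \<Rightarrow> padic2"
  is "\<lambda>x m. (- x m) mod 2^m"
  apply (intro allI conjI)
  apply simp
  apply (simp only: mod_Suc_pow2)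
  by (metis mod_minus_eq)
lift_definition minus_padic2 :: "padic2 \<Rightarrow> padic2 \<Rightarrow> padic2"
  is "\<lambda>x y m. (x m - y m) mod 2^m"
  apply (intro allI conjI)
  apply simp
  apply (simp only: mod_Suc_pow2)
  by (metis mod_diff_eq)
lift_definition times_padic2 :: "padic2 \<Rightarrow> padic2 \<Rightarrow> padic2"
  is "\<lambda>x y m. (x m * y m) mod 2^m"
  apply (intro allI conjI)
  apply simp
  apply (simp only: mod_Suc_pow2)
  by (metis mod_mult_eq)

instance
proof
  fix a b c :: padic2
  show "a * b * c = a * (b * c)"
    by (rule digits_inject[THEN iffD1])
       (simp add: times_padic2.rep_eq mod_mult_left_eq mod_mult_right_eq mult.assoc fun_eq_iff)
  show "a * b = b * a"
    by (rule digits_inject[THEN iffD1]) (simp add: times_padic2.rep_eq mult.commute)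
  show "1 * a = a"
    by (rule digits_inject[THEN iffD1])
       (simp add: times_padic2.rep_eq one_padic2.rep_eq mod_mult_left_eq fun_eq_iff)
  show "a + b + c = a + (b + c)"
    by (rule digits_inject[THEN iffD1])
       (simp add: plus_padic2.rep_eq mod_add_left_eq mod_add_right_eq add.assoc fun_eq_iff)
  show "a + b = b + a"
    by (rule digits_inject[THEN iffD1]) (simp add: plus_padic2.rep_eq add.commute)
  show "0 + a = a"
    by (rule digits_inject[THEN iffD1]) (simp add: plus_padic2.rep_eq zero_padic2.rep_eq fun_eq_iff)
  show "- a + a = 0"
    by (rule digits_inject[THEN iffD1])
       (simp add: plus_padic2.rep_eq uminus_padic2.rep_eq zero_padic2.rep_eq mod_add_left_eq fun_eq_iff)
  show "a - b = a + - b"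
    by (rule digits_inject[THEN iffD1])
       (simp add: plus_padic2.rep_eq uminus_padic2.rep_eq minus_padic2.rep_eq mod_add_right_eq fun_eq_iff)
  show "(a + b) * c = a * c + b * c"
    by (rule digits_inject[THEN iffD1])
       (simp add: plus_padic2.rep_eq times_padic2.rep_eq mod_mult_left_eq mod_add_eq distrib_right fun_eq_iff)
  show "(0::padic2) \<noteq> 1"
  proof
    assume "(0::padic2) = 1"
    hence "digits (0::padic2) 1 = digits (1::padic2) 1" by simp
    thus False by (simp add: zero_padic2.rep_eq one_padic2.rep_eq)
  qed
qed
end

definition red :: "nat \<Rightarrow> padic2 \<Rightarrow> int" where
  "red n x = digits x n"

text \<open>Z_2 is an integral domain (needed for the library's formal derivative pderiv).\<close>

lemma digits_mono_mod:
  assumes "k \<le> m" shows "digits x m mod 2^k = digits x k"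
  using assms
proof (induction m)
  case 0 thus ?case by simp
next
  case (Suc m)
  show ?case
  proof (cases "k = Suc m")
    case True thus ?thesis by (simp only: True digits_mod)
  next
    case False
    hence km: "k \<le> m" using Suc by simp
    have "digits x (Suc m) mod 2^k = digits x (Suc m) mod 2^m mod 2^k"
      using km by (simp add: mod_mod_cancel le_imp_power_dvd)
    also have "\<dots> = digits x m mod 2^k" by (simp only: digits_Suc)
    finally show ?thesis using Suc.IH km by simp
  qed
qed

lemma padic2_nonzero_val:
  assumes "x \<noteq> 0"
  obtains i where "\<And>m. m > i \<Longrightarrow> digits x m mod 2^Suc i = 2^i"
proof -
  have "\<exists>m. digits x m \<noteq> 0"
  proof (rule ccontr)
    assume "\<not> ?thesis"
    hence "digits x = digits 0" by (auto simp: zero_padic2.rep_eq)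
    thus False using assms digits_inject by blast
  qed
  then obtain m where m: "digits x m \<noteq> 0" by blast
  define j where "j = (LEAST j. digits x j \<noteq> 0)"
  have j: "digits x j \<noteq> 0" unfolding j_def by (rule LeastI, rule m)
  have j0: "j \<noteq> 0" using j by (metis digits_0)
  then obtain i where ij: "j = Suc i" by (cases j) auto
  have xi: "digits x i = 0"
  proof (rule ccontr)
    assume "digits x i \<noteq> 0"
    hence "j \<le> i" unfolding j_def by (rule Least_le)
    thus False using ij by simp
  qed
  have rng: "digits x (Suc i) \<in> {0..<2^Suc i}" by (rule digits_range)
  have "digits x (Suc i) mod 2^i = 0" using digits_Suc[of x i] xi by simp
  then obtain q where q: "digits x (Suc i) = 2^i * q"
    by (metis dvd_def mod_0_imp_dvd)
  have "q \<noteq> 0" using q j ij by auto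
  moreover have "0 \<le> 2^i * q" using q rng by simp
  hence "q \<ge> 0" by (simp add: zero_le_mult_iff)
  moreover have "2^i * q < 2^i * 2" using q rng by simp
  hence "q < 2" by simp
  ultimately have "q = 1" by simp
  hence xsi: "digits x (Suc i) = 2^i" using q by simp
  show ?thesis
  proof (rule that)
    fix m assume "m > i"
    hence "Suc i \<le> m" by simp
    thus "digits x m mod 2^Suc i = 2^i" using digits_mono_mod[of "Suc i" m x] xsi by (simp only:)
  qed
qed

lemma pow2_decomp:
  assumes "(a::int) mod 2^Suc i = 2^i" obtains s where "a = 2^i + 2^Suc i * s"
proof -
  have e: "a = 2^i + 2^Suc i * (a div 2^Suc i)"
    by (metis assms add.commute div_mult_mod_eq mult.commute)
  show ?thesis by (rule that[OF e])
qed

instance padic2 :: idom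
proof
  fix a b :: padic2
  assume a: "a \<noteq> 0" and b: "b \<noteq> 0"
  obtain i where ai: "\<And>m. m > i \<Longrightarrow> digits a m mod 2^Suc i = 2^i"
    using padic2_nonzero_val[OF a] by blast
  obtain j where bj: "\<And>m. m > j \<Longrightarrow> digits b m mod 2^Suc j = 2^j"
    using padic2_nonzero_val[OF b] by blast
  define m where "m = Suc (i + j)"
  obtain s where s: "digits a m = 2^i + 2^Suc i * s"
    using ai[of m] pow2_decomp unfolding m_def by auto
  obtain t where t: "digits b m = 2^j + 2^Suc j * t"
    using bj[of m] pow2_decomp unfolding m_def by auto
  have "digits a m * digits b m = 2^(i+j) + 2^m * (s + t + 2 * s * t)"
    unfolding s t by (simp add: m_def algebra_simps power_add)
  hence "(digits a m * digits b m) mod 2^m = 2^(i+j) mod 2^m"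
    by simp
  also have "\<dots> = 2^(i+j)" unfolding m_def by simp
  finally have "digits (a * b) m \<noteq> 0" by (simp add: times_padic2.rep_eq)
  thus "a * b \<noteq> 0" by (auto simp: zero_padic2.rep_eq)
qed

text \<open>Elements of Z/2^n Z are represented by integers in {0..<2^n}.
  The induced map: f_n(y mod 2^n) = f(y) mod 2^n.\<close>
definition fmap :: "nat \<Rightarrow> padic2 poly \<Rightarrow> int \<Rightarrow> int" where
  "fmap n f y = red n (poly f (of_int y))"

text \<open>A cycle of f_n, identified with its set of points (a k-cycle tuple up to rotation).\<close>
definition is_cycle :: "nat \<Rightarrow> padic2 poly \<Rightarrow> int set \<Rightarrow> bool" where
  "is_cycle n f C \<longleftrightarrow> (\<exists>xs. xs \<noteq> [] \<and> distinct xs \<and> set xs \<subseteq> {0..<2^n} \<and>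
      (\<forall>i < length xs. fmap n f (xs ! i) = xs ! ((i + 1) mod length xs)) \<and> C = set xs)"

definition lifts :: "nat \<Rightarrow> padic2 poly \<Rightarrow> int set \<Rightarrow> int set set" where
  "lifts n f C = {D. is_cycle (Suc n) f D \<and> D \<subseteq> {y \<in> {0..<2^Suc n}. y mod 2^n \<in> C}}"

definition piter :: "padic2 poly \<Rightarrow> nat \<Rightarrow> padic2 poly" where
  "piter f k = ((\<lambda>p. pcompose f p) ^^ k) [:0, 1:]"

definition rep :: "nat \<Rightarrow> int set \<Rightarrow> padic2" where
  "rep n C = (SOME x. red n x \<in> C)"

definition a_val :: "nat \<Rightarrow> padic2 poly \<Rightarrow> int set \<Rightarrow> padic2" where
  "a_val n f C = poly (pderiv (piter f (card C))) (rep n C)"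

definition b_val :: "nat \<Rightarrow> padic2 poly \<Rightarrow> int set \<Rightarrow> padic2" where
  "b_val n f C = (THE b. poly (piter f (card C)) (rep n C) - rep n C = 2^n * b)"

definition strongly_grows :: "nat \<Rightarrow> padic2 poly \<Rightarrow> int set \<Rightarrow> bool" where
  "strongly_grows n f C \<longleftrightarrow> red 2 (a_val n f C) = 1 \<and> red 1 (b_val n f C) = 1"

definition weakly_grows :: "nat \<Rightarrow> padic2 poly \<Rightarrow> int set \<Rightarrow> bool" where
  "weakly_grows n f C \<longleftrightarrow> red 2 (a_val n f C) = 3 \<and> red 1 (b_val n f C) = 1"

definition strongly_splits :: "nat \<Rightarrow> padic2 poly \<Rightarrow> int set \<Rightarrow> bool" where
  "strongly_splits n f C \<longleftrightarrow> red 2 (a_val n f C) = 1 \<and> red 1 (b_val n f C) = 0"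

definition weakly_splits :: "nat \<Rightarrow> padic2 poly \<Rightarrow> int set \<Rightarrow> bool" where
  "weakly_splits n f C \<longleftrightarrow> red 2 (a_val n f C) = 3 \<and> red 1 (b_val n f C) = 0"

end

theory Submission
  imports Defs
begin


lemma red_add: "red m (x + y) = (red m x + red m y) mod 2^m"
  by (simp add: red_def plus_padic2.rep_eq)
lemma red_diff: "red m (x - y) = (red m x - red m y) mod 2^m"
  by (simp add: red_def minus_padic2.rep_eq)
lemma red_mult: "red m (x * y) = (red m x * red m y) mod 2^m"
  by (simp add: red_def times_padic2.rep_eq)
lemma red_uminus: "red m (- x) = (- red m x) mod 2^m"
  by (simp add: red_def uminus_padic2.rep_eq)
lemma red_one: "red m 1 = 1 mod 2^m"
  by (simp add: red_def one_padic2.rep_eq)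
lemma red_range: "red m x \<in> {0..<2^m}"
  unfolding red_def by (rule digits_range)
lemma red_mod[simp]: "red m x mod 2^m = red m x"
  by (simp add: red_def)
lemma red_mono: "k \<le> m \<Longrightarrow> red m x mod 2^k = red k x"
  by (simp add: red_def digits_mono_mod)

lemma red_of_nat: "red m (of_nat k) = int k mod 2^m"
proof (induction k)
  case 0 then show ?case by (simp add: red_def zero_padic2.rep_eq)
next
  case (Suc k)
  have "red m (of_nat (Suc k)) = red m (1 + of_nat k)" by simp
  also have "\<dots> = (1 mod 2^m + int k mod 2^m) mod 2^m" by (simp add: red_add red_one Suc)
  also have "\<dots> = (1 + int k) mod 2^m" by (metis mod_add_eq)
  also have "\<dots> = int (Suc k) mod 2^m" by simp
  finally show ?case .
qed

lemma red_of_int: "red m (of_int z) = z mod 2^m"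
proof (cases "z \<ge> 0")
  case True
  then have "red m (of_int z) = red m (of_nat (nat z))" by (metis of_int_of_nat_eq nat_0_le)
  also have "\<dots> = int (nat z) mod 2^m" by (rule red_of_nat)
  finally show ?thesis using True by simp
next
  case False
  have e1: "(of_int z :: padic2) = - of_int (-z)" by simp
  have e2: "(of_int (-z) :: padic2) = of_nat (nat (-z))" using False by simp
  have "red m (of_int z) = (- red m (of_nat (nat (-z)))) mod 2^m" unfolding e1 e2 by (rule red_uminus)
  also have "\<dots> = (- (int (nat (-z)) mod 2^m)) mod 2^m" by (simp only: red_of_nat)
  also have "\<dots> = (- int (nat (-z))) mod 2^m" by (rule mod_minus_eq)
  also have "\<dots> = z mod 2^m" using False by simp
  finally show ?thesis .
qed

lemma red_pow2: "red m ((2::padic2)^j) = 2^j mod 2^m"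
proof -
  have "(2::padic2)^j = of_int (2^j)" by simp
  then show ?thesis using red_of_int[of m "2^j"] by simp
qed

lemma int_range_eq: "(a::int) \<in> {0..<M} \<Longrightarrow> b \<in> {0..<M} \<Longrightarrow> (a - b) mod M = 0 \<Longrightarrow> a = b"
proof -
  assume a: "a \<in> {0..<M}" and b: "b \<in> {0..<M}" and c: "(a - b) mod M = 0"
  have "a mod M = b mod M" using c by (simp add: mod_eq_dvd_iff mod_eq_0_iff_dvd)
  moreover have "a mod M = a" "b mod M = b" using a b by auto
  ultimately show ?thesis by simp
qed



lemma dvd_red: assumes "(2::padic2)^m dvd (x - y)" shows "red m x = red m y"
proof -
  obtain c where c: "x - y = 2^m * c" using assms by (auto simp: dvd_def)
  have r2: "red m ((2::padic2)^m) = 0" by (simp add: red_pow2)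
  have "red m (x - y) = red m (2^m * c)" using c by simp
  also have "\<dots> = (red m (2^m) * red m c) mod 2^m" by (rule red_mult)
  also have "\<dots> = 0" using r2 by simp
  finally have "red m (x - y) = 0" .
  hence "(red m x - red m y) mod 2^m = 0" by (simp add: red_diff)
  thus ?thesis by (rule int_range_eq[OF red_range red_range])
qed

lemma red_zero_dvd: assumes "red m z = 0" shows "(2::padic2)^m dvd z"
proof -
  define c where "c j = digits z (j+m) div 2^m" for j
  have zm: "digits z (j+m) mod 2^m = 0" for j
    using digits_mono_mod[of m "j+m" z] assms by (simp add: red_def)
  have zc: "digits z (j+m) = 2^m * c j" for j
    unfolding c_def using zm[of j] by (metis mult_div_mod_eq add_0_right)
  have cr: "c j \<in> {0..<2^j}" for j
  proof -
    have "digits z (j+m) \<in> {0..<2^(j+m)}" by (rule digits_range)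
    hence "0 \<le> 2^m * c j" "2^m * c j < 2^m * 2^j" using zc[of j] by (auto simp: power_add)
    thus ?thesis by (auto simp: zero_le_mult_iff)
  qed
  have cc: "c (Suc j) mod 2^j = c j" for j
  proof -
    have h1: "digits z (Suc j + m) mod 2^(j+m) = digits z (j+m)"
      using digits_Suc[of z "j+m"] by simp
    have "(2::int)^(j+m) = 2^m * 2^j" by (simp add: power_add)
    hence "(2^m * c (Suc j)) mod (2^m * 2^j) = 2^m * c j" using h1 zc[of "Suc j"] zc[of j] by metis
    hence "2^m * (c (Suc j) mod 2^j) = 2^m * c j" by (simp add: mod_mult_mult1)
    thus ?thesis by simp
  qed
  have mem: "c \<in> {x :: nat \<Rightarrow> int. \<forall>m. x m \<in> {0..<2^m} \<and> x (Suc m) mod 2^m = x m}"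
    using cr cc by blast
  define C where "C = Abs_padic2 c"
  have dC: "digits C = c" unfolding C_def using mem by (simp add: Abs_padic2_inverse)
  have "digits (2^m * C) j = digits z j" for j
  proof -
    have "digits (2^m * C) j = red j (2^m * C)" by (simp add: red_def)
    also have "\<dots> = (2^m mod 2^j * c j) mod 2^j" using red_mult[of j "2^m" C] red_pow2[of j m] dC by (simp add: red_def)
    also have "\<dots> = (2^m * c j) mod 2^j" by (simp add: mod_mult_left_eq)
    also have "\<dots> = digits z (j+m) mod 2^j" by (simp add: zc)
    also have "\<dots> = digits z j" by (simp add: digits_mono_mod)
    finally show ?thesis .
  qed
  hence "2^m * C = z" by (simp add: digits_inject[symmetric] fun_eq_iff)
  thus ?thesis by (metis dvd_triv_left)
qed

lemma red_dvd: assumes "red m x = red m y" shows "(2::padic2)^m dvd (x - y)"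
proof -
  have "red m (x - y) = 0" using assms by (simp add: red_diff)
  thus ?thesis by (rule red_zero_dvd)
qed

lemma red_eq_iff: "red m x = red m y \<longleftrightarrow> (2::padic2)^m dvd (x - y)"
  using dvd_red red_dvd by blast

lemma two_nz[simp]: "(2::padic2) \<noteq> 0"
  proof
    assume "(2::padic2) = 0"
    hence "red 2 (2::padic2) = red 2 0" by simp
    thus False using red_pow2[of 2 1] red_of_int[of 2 0] by simp
  qed

lemma two_pow_nz: "(2::padic2)^m \<noteq> 0"
  by simp

lemma not_two_dvd_one: "\<not> (2::padic2) dvd 1"
proof
  assume "(2::padic2) dvd 1"
  hence "red 1 (1::padic2) = red 1 0" using dvd_red[of 1 1 0] by simp
  thus False using red_one[of 1] red_of_int[of 1 0] by simp
qed

lemma parity: "(2::padic2) dvd x \<or> (2::padic2) dvd (x - 1)"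
proof -
  have "red 1 x \<in> {0..<2}" using red_range[of 1 x] by simp
  hence "red 1 x = 0 \<or> red 1 x = 1" by auto
  moreover have "red 1 (0::padic2) = 0" "red 1 (1::padic2) = 1" using red_one[of 1] red_of_int[of 1 0] by auto
  ultimately show ?thesis using red_dvd[of 1 x 0] red_dvd[of 1 x 1] by auto
qed

lemma odd_iff: "\<not> (2::padic2) dvd x \<longleftrightarrow> (2::padic2) dvd (x - 1)"
proof
  assume "\<not> (2::padic2) dvd x" thus "(2::padic2) dvd (x - 1)" using parity by blast
next
  assume a: "(2::padic2) dvd (x - 1)"
  show "\<not> (2::padic2) dvd x"
  proof
    assume "(2::padic2) dvd x" 
    hence "(2::padic2) dvd (x - (x - 1))" using a by (rule dvd_diff)
    thus False using not_two_dvd_one by simp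
  qed
qed

lemma two_prime: assumes "(2::padic2) dvd x * y" shows "2 dvd x \<or> 2 dvd y"
proof (rule ccontr)
  assume "\<not> ?thesis"
  then obtain a b where "x = 2*a + 1" "y = 2*b + 1" using odd_iff
    by (metis dvd_def diff_add_cancel add.commute)
  hence "x * y = 2 * (2*a*b + a + b) + 1" by (simp add: algebra_simps)
  hence "(2::padic2) dvd 1" using assms by (metis dvd_add_right_iff dvd_triv_left)
  thus False using not_two_dvd_one by simp
qed

lemma cancel_odd: assumes "(2::padic2)^m dvd g * d" and "\<not> 2 dvd g" shows "(2::padic2)^m dvd d"
  using assms(1)
proof (induction m arbitrary: d)
  case 0 thus ?case by simp
next
  case (Suc m)
  have "(2::padic2) dvd g * d" using Suc.prems by (metis dvd_mult_left power_Suc)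
  hence "2 dvd d" using two_prime assms(2) by blast
  then obtain d' where d': "d = 2 * d'" by (auto simp: dvd_def)
  have "2 * 2^m dvd 2 * (g * d')" using Suc.prems d' by (simp add: ac_simps)
  hence "2^m dvd g * d'" using two_pow_nz[of 1] by (simp add: mult_dvd_mono) 
  hence "2^m dvd d'" by (rule Suc.IH)
  thus ?case using d' by simp
qed

lemma cancel_pow: "(2::padic2)^m * x = 2^m * y \<Longrightarrow> x = y"
  using two_pow_nz by simp

lemma dvd_shift: "((2::padic2)^(Suc m) dvd 2^m * b) \<longleftrightarrow> 2 dvd b"
proof -
  have "(2::padic2)^(Suc m) = 2^m * 2" by simp
  thus ?thesis using two_pow_nz[of m] by (simp add: mult_dvd_mono)
qed



lemma piter_0: "piter f 0 = [:0, 1:]" by (simp add: piter_def)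
lemma piter_Suc: "piter f (Suc j) = pcompose f (piter f j)" by (simp add: piter_def)

lemma Phi_0[simp]: "poly (piter f 0) x = x" by (simp add: piter_0)
lemma Phi_Suc: "poly (piter f (Suc j)) x = poly f (poly (piter f j) x)"
  by (simp add: piter_Suc poly_pcompose)
lemma Phi_add: "poly (piter f (i + j)) x = poly (piter f i) (poly (piter f j) x)"
  by (induction i) (simp_all add: Phi_Suc)

lemma D_0[simp]: "poly (pderiv (piter f 0)) x = 1" by (simp add: piter_0 pderiv_pCons)
lemma D_Suc: "poly (pderiv (piter f (Suc j))) x = poly (pderiv f) (poly (piter f j) x) * poly (pderiv (piter f j)) x"
  by (simp add: piter_Suc pderiv_pcompose poly_pcompose)
lemma D_add: "poly (pderiv (piter f (i + j))) x =
   poly (pderiv (piter f i)) (poly (piter f j) x) * poly (pderiv (piter f j)) x"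
  by (induction i) (simp_all add: D_Suc Phi_add)

lemma taylor: "\<exists>c. poly p (x + h) = poly p x + h * poly (pderiv p) x + h^2 * (c::padic2)"
proof (induction p)
  case 0 thus ?case by simp
next
  case (pCons a q)
  then obtain c where c: "poly q (x + h) = poly q x + h * poly (pderiv q) x + h^2 * c" by blast
  have "poly (pCons a q) (x + h) = a + (x + h) * poly q (x + h)" by simp
  also have "\<dots> = poly (pCons a q) x + h * poly (pderiv (pCons a q)) x + h^2 * (poly (pderiv q) x + (x + h) * c)"
    unfolding c by (simp add: pderiv_pCons algebra_simps power2_eq_square)
  finally show ?case by blast
qed

lemma poly_diff_dvd: "(x - y) dvd (poly p x - poly p (y::padic2))"
proof -
  obtain c where c: "poly p (y + (x - y)) = poly p y + (x - y) * poly (pderiv p) y + (x - y)^2 * c"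
    using taylor by blast
  hence "poly p x - poly p y = (x - y) * (poly (pderiv p) y + (x - y) * c)"
    by (simp add: algebra_simps power2_eq_square)
  thus ?thesis by simp
qed

lemma poly_cong: "M dvd (x - y) \<Longrightarrow> M dvd (poly p x - poly p (y::padic2))"
  using poly_diff_dvd dvd_trans by blast

lemma red_poly: "red m x = red m y \<Longrightarrow> red m (poly p x) = red m (poly p y)"
  using poly_cong red_eq_iff by blast

lemma red_of_int_red: "red m (of_int (red m x)) = red m x"
  by (simp add: red_of_int)

lemma fmap_red: "fmap m f (red m x) = red m (poly f x)"
  unfolding fmap_def using red_poly[OF red_of_int_red] by blast

lemma fmap_iter: "(fmap m f ^^ j) (red m x) = red m (poly (piter f j) x)"
  by (induction j) (simp_all add: fmap_red Phi_Suc)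

lemma red_red: "z \<in> {0..<2^m} \<Longrightarrow> red m (of_int z) = z"
  by (simp add: red_of_int)



lemma list_orbit:
  assumes L: "L = length xs" and step: "\<forall>i < L. g (xs ! i) = xs ! ((i + 1) mod L)" and j: "j < L"
  shows "(g ^^ i) (xs ! j) = xs ! ((j + i) mod L)"
proof (induction i)
  case 0 thus ?case using j by simp
next
  case (Suc i)
  have "(g ^^ Suc i) (xs ! j) = g (xs ! ((j + i) mod L))" using Suc by simp
  also have "\<dots> = xs ! (((j + i) mod L + 1) mod L)" using step j by simp
  also have "((j + i) mod L + 1) mod L = (j + Suc i) mod L" by (simp add: mod_Suc_eq)
  finally show ?case .
qed

lemma cycle_props:
  assumes "is_cycle m f C" and "y \<in> C"
  shows "C \<subseteq> {0..<2^m}" "finite C" "card C \<ge> 1"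
    "C = range (\<lambda>i. (fmap m f ^^ i) y)"
    "(fmap m f ^^ card C) y = y"
    "\<And>i. 0 < i \<Longrightarrow> i < card C \<Longrightarrow> (fmap m f ^^ i) y \<noteq> y"
proof -
  obtain xs where xs: "xs \<noteq> []" "distinct xs" "set xs \<subseteq> {0..<2^m}"
    "\<forall>i < length xs. fmap m f (xs ! i) = xs ! ((i + 1) mod length xs)" "C = set xs"
    using assms(1) unfolding is_cycle_def by blast
  define L where "L = length xs"
  have cL: "card C = L" using xs distinct_card L_def by metis
  obtain j where j: "j < L" "y = xs ! j" using assms(2) xs(5) L_def by (metis in_set_conv_nth)
  have orb: "(fmap m f ^^ i) y = xs ! ((j + i) mod L)" for i
    using list_orbit[OF L_def xs(4)[folded L_def] j(1)] j(2) by simp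
  have Lp: "L > 0" using xs(1) L_def by simp
  show "C \<subseteq> {0..<2^m}" "finite C" using xs by auto
  show "card C \<ge> 1" using cL Lp by simp
  show "C = range (\<lambda>i. (fmap m f ^^ i) y)"
  proof
    show "C \<subseteq> range (\<lambda>i. (fmap m f ^^ i) y)"
    proof
      fix z assume "z \<in> C"
      then obtain l where l: "l < L" "z = xs ! l" using xs(5) L_def by (metis in_set_conv_nth)
      have "(j + (l + L - j)) mod L = l" using j l by simp
      hence "(fmap m f ^^ (l + L - j)) y = z" using orb l by simp
      thus "z \<in> range (\<lambda>i. (fmap m f ^^ i) y)" by (metis rangeI)
    qed
    show "range (\<lambda>i. (fmap m f ^^ i) y) \<subseteq> C"
      using orb xs(5) L_def Lp by auto
  qed
  show "(fmap m f ^^ card C) y = y" using orb cL j by simp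
  fix i assume i: "0 < i" "i < card C"
  show "(fmap m f ^^ i) y \<noteq> y"
  proof
    assume "(fmap m f ^^ i) y = y"
    hence "xs ! ((j + i) mod L) = xs ! j" using orb j by simp
    hence e: "(j + i) mod L = j" using xs(2) j Lp by (simp add: nth_eq_iff_index_eq L_def)
    show False
    proof (cases "j + i < L")
      case True thus False using e i by simp
    next
      case False
      hence "(j + i) mod L = j + i - L" using j i cL by (simp add: le_mod_geq)
      thus False using e i cL by simp
    qed
  qed
qed

lemma cycle_closed: "is_cycle m f C \<Longrightarrow> y \<in> C \<Longrightarrow> (fmap m f ^^ i) y \<in> C"
  using cycle_props(4) by blast

lemma cycle_share: "is_cycle m f C \<Longrightarrow> is_cycle m f D \<Longrightarrow> y \<in> C \<Longrightarrow> y \<in> D \<Longrightarrow> C = D"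
  using cycle_props(4) by metis

lemma per_red:
  assumes "red m (poly (piter f p) x) = red m x"
  shows "red m (poly (piter f (q * p + r)) x) = red m (poly (piter f r) x)"
proof (induction q)
  case 0 thus ?case by simp
next
  case (Suc q)
  have "poly (piter f (Suc q * p + r)) x = poly (piter f (q * p + r)) (poly (piter f p) x)"
    using Phi_add[of f "q * p + r" p x] by (simp add: algebra_simps)
  hence "red m (poly (piter f (Suc q * p + r)) x) = red m (poly (piter f (q * p + r)) x)"
    using red_poly[OF assms] by simp
  thus ?case using Suc by simp
qed

lemma orbit_cycle:
  assumes p: "p \<ge> 1" and per: "red m (poly (piter f p) x) = red m x"
    and mn: "\<And>i. 0 < i \<Longrightarrow> i < p \<Longrightarrow> red m (poly (piter f i) x) \<noteq> red m x"
  shows "is_cycle m f ((\<lambda>i. red m (poly (piter f i) x)) ` {..<p})"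
    "card ((\<lambda>i. red m (poly (piter f i) x)) ` {..<p}) = p"
proof -
  define xs where "xs = map (\<lambda>i. red m (poly (piter f i) x)) [0..<p]"
  have len: "length xs = p" by (simp add: xs_def)
  have nth: "i < p \<Longrightarrow> xs ! i = red m (poly (piter f i) x)" for i by (simp add: xs_def)
  have setxs: "set xs = (\<lambda>i. red m (poly (piter f i) x)) ` {..<p}" by (auto simp: xs_def)
  have dist: "distinct xs"
  proof (rule ccontr)
    assume "\<not> distinct xs"
    then obtain i j where ij: "i < j" "j < p" "xs ! i = xs ! j"
      using len by (metis distinct_conv_nth linorder_neqE_nat)
    hence e: "red m (poly (piter f i) x) = red m (poly (piter f j) x)" using nth by simp
    have "red m (poly (piter f (p - j + i)) x) = red m (poly (piter f (p - j)) (poly (piter f i) x))"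
      by (simp add: Phi_add)
    also have "\<dots> = red m (poly (piter f (p - j)) (poly (piter f j) x))" using red_poly[OF e] by simp
    also have "\<dots> = red m (poly (piter f p) x)" using ij by (simp add: Phi_add[symmetric])
    also have "\<dots> = red m x" by (rule per)
    finally have eq: "red m (poly (piter f (p - j + i)) x) = red m x" .
    have h: "0 < p - j + i" "p - j + i < p" using ij by auto
    show False using mn[OF h] eq by blast
  qed
  have step: "\<forall>i < length xs. fmap m f (xs ! i) = xs ! ((i + 1) mod length xs)"
  proof (intro allI impI)
    fix i assume i: "i < length xs"
    have "fmap m f (xs ! i) = red m (poly (piter f (Suc i)) x)"
      using i len nth by (simp add: fmap_red Phi_Suc)
    also have "\<dots> = xs ! ((i + 1) mod length xs)"
    proof (cases "Suc i < p")
      case True thus ?thesis using nth len by simp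
    next
      case False hence "Suc i = p" using i len by simp
      thus ?thesis using per nth len p by simp
    qed
    finally show "fmap m f (xs ! i) = xs ! ((i + 1) mod length xs)" .
  qed
  have sub: "set xs \<subseteq> {0..<2^m}" using red_range by (auto simp: xs_def)
  have ne: "xs \<noteq> []" using len p by auto
  show "is_cycle m f ((\<lambda>i. red m (poly (piter f i) x)) ` {..<p})"
    unfolding is_cycle_def using ne dist sub step setxs by metis
  show "card ((\<lambda>i. red m (poly (piter f i) x)) ` {..<p}) = p"
    using setxs dist len distinct_card by metis
qed



lemma two_dvd_pow: assumes "m \<ge> 1" shows "(2::padic2) dvd 2^m"
proof -
  have "(2::padic2)^m = 2 * 2^(m-1)" using assms by (cases m) auto
  thus ?thesis by simp
qed

lemma rep_mem: assumes "C \<noteq> {}" "C \<subseteq> {0..<2^m}" shows "red m (rep m C) \<in> C"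
proof -
  obtain y where y: "y \<in> C" using assms by blast
  hence "red m (of_int y) \<in> C" using assms red_red by auto
  thus ?thesis unfolding rep_def by (rule someI)
qed

lemma the_b: "poly (piter f k) x - x = 2^m * b \<Longrightarrow> (THE b. poly (piter f k) x - x = 2^m * b) = b"
  by (rule the_equality) (auto dest: cancel_pow)

lemma b_exists: "red m (poly (piter f k) x) = red m x \<Longrightarrow> \<exists>b. poly (piter f k) x - x = (2::padic2)^m * b"
  using red_dvd by (auto simp: dvd_def)

lemma cycle_rep:
  assumes "is_cycle m f C"
  defines "x \<equiv> rep m C"
  shows "red m x \<in> C" "red m (poly (piter f (card C)) x) = red m x"
    "\<And>i. 0 < i \<Longrightarrow> i < card C \<Longrightarrow> red m (poly (piter f i) x) \<noteq> red m x"
    "C = range (\<lambda>i. red m (poly (piter f i) x))" "card C \<ge> 1"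
proof -
  have ne: "C \<noteq> {}" using assms(1) unfolding is_cycle_def by auto
  show xin: "red m x \<in> C" unfolding x_def using rep_mem ne cycle_props(1)[OF assms(1)]
    by (metis ex_in_conv)
  show "red m (poly (piter f (card C)) x) = red m x"
    using cycle_props(5)[OF assms(1) xin] by (simp add: fmap_iter)
  show "\<And>i. 0 < i \<Longrightarrow> i < card C \<Longrightarrow> red m (poly (piter f i) x) \<noteq> red m x"
    using cycle_props(6)[OF assms(1) xin] by (simp add: fmap_iter)
  show "C = range (\<lambda>i. red m (poly (piter f i) x))"
    using cycle_props(4)[OF assms(1) xin] by (simp add: fmap_iter)
  show "card C \<ge> 1" using cycle_props(3)[OF assms(1) xin] .
qed

lemma inv_lemma:
  assumes m: "m \<ge> 1" and ip: "i < p"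
    and bx: "poly (piter f p) x - x = 2^m * b"
    and oddA: "\<not> (2::padic2) dvd poly (pderiv (piter f p)) x"
    and x': "red m x' = red m (poly (piter f i) x)"
    and bx': "poly (piter f p) x' - x' = 2^m * b'"
  shows "(2::padic2)^m dvd (poly (pderiv (piter f p)) x' - poly (pderiv (piter f p)) x)"
    "(2::padic2) dvd (b' - b)"
proof -
  define u where "u = poly (piter f i) x"
  define g where "g = poly (pderiv (piter f i)) x"
  define A where "A = poly (pderiv (piter f p)) x"
  have "A = poly (pderiv (piter f (p - i))) u * g"
    unfolding A_def u_def g_def using D_add[of f "p - i" i x] ip by simp
  hence oddg: "\<not> 2 dvd g" using oddA A_def by (metis dvd_mult)
  hence g1: "2 dvd (g - 1)" using odd_iff by blast
  have two_m: "(2::padic2) dvd 2^m" using two_dvd_pow m .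
  have Fx: "poly (piter f p) x = x + 2^m * b" using bx by (simp add: algebra_simps)
  obtain c where c: "poly (piter f i) (x + 2^m * b) = u + 2^m * b * g + (2^m * b)^2 * c"
    using taylor[of "piter f i" x "2^m * b"] unfolding u_def g_def by blast
  have Fu: "poly (piter f p) u = poly (piter f i) (poly (piter f p) x)"
    unfolding u_def using Phi_add[of f p i x] Phi_add[of f i p x] by (simp add: add.commute)
  define bu where "bu = b * g + 2^m * b^2 * c"
  have bu: "poly (piter f p) u - u = 2^m * bu"
    unfolding Fu Fx c bu_def by (simp add: algebra_simps power2_eq_square power_mult_distrib)
  have "bu - b = b * (g - 1) + 2^m * (b^2 * c)" unfolding bu_def by (simp add: algebra_simps)
  hence bub: "2 dvd (bu - b)" using g1 two_m by (metis dvd_add dvd_mult dvd_mult2)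
  define Au where "Au = poly (pderiv (piter f p)) u"
  have e1: "poly (pderiv (piter f (p + i))) x = Au * g"
    unfolding Au_def u_def g_def by (rule D_add)
  have e2: "poly (pderiv (piter f (p + i))) x = poly (pderiv (piter f i)) (poly (piter f p) x) * A"
    unfolding A_def using D_add[of f i p x] by (simp add: add.commute)
  have "(2::padic2)^m dvd (poly (piter f p) x - x)" using bx by simp
  hence "(2::padic2)^m dvd (poly (pderiv (piter f i)) (poly (piter f p) x) - g)"
    unfolding g_def by (rule poly_cong)
  hence "(2::padic2)^m dvd ((poly (pderiv (piter f i)) (poly (piter f p) x) - g) * A)" by simp
  moreover have "(poly (pderiv (piter f i)) (poly (piter f p) x) - g) * A = g * (Au - A)"
    using e1 e2 by (simp add: algebra_simps)
  ultimately have "(2::padic2)^m dvd g * (Au - A)" by simp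
  hence AuA: "(2::padic2)^m dvd (Au - A)" using cancel_odd oddg by blast
  have "(2::padic2)^m dvd (x' - u)" using x' red_eq_iff u_def by blast
  then obtain d where d: "x' = u + 2^m * d" by (metis dvd_def add_diff_cancel_left' add.commute diff_add_cancel)
  have "(2::padic2)^m dvd (poly (pderiv (piter f p)) x' - Au)"
    unfolding Au_def using \<open>(2::padic2)^m dvd (x' - u)\<close> by (rule poly_cong)
  from dvd_add[OF this AuA] show "(2::padic2)^m dvd (poly (pderiv (piter f p)) x' - poly (pderiv (piter f p)) x)"
    unfolding A_def by simp
  have oddAu: "\<not> 2 dvd Au"
  proof
    assume "2 dvd Au"
    moreover have "2 dvd (Au - A)" using AuA two_m dvd_trans by blast
    ultimately have "2 dvd (Au - (Au - A))" by (rule dvd_diff)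
    thus False using oddA A_def by simp
  qed
  hence Au1: "2 dvd (Au - 1)" using odd_iff by blast
  obtain c' where c': "poly (piter f p) (u + 2^m * d) = poly (piter f p) u + 2^m * d * Au + (2^m * d)^2 * c'"
    using taylor[of "piter f p" u "2^m * d"] unfolding Au_def by blast
  have "poly (piter f p) x' - x' = 2^m * (bu + d * (Au - 1) + 2^m * d^2 * c')"
    using bu unfolding d c' by (simp add: algebra_simps power2_eq_square power_mult_distrib)
  hence "(2::padic2)^m * b' = 2^m * (bu + d * (Au - 1) + 2^m * d^2 * c')" using bx' by metis
  hence "b' = bu + d * (Au - 1) + 2^m * d^2 * c'" by (rule cancel_pow)
  hence "b' - bu = d * (Au - 1) + 2^m * (d^2 * c')" by (simp add: algebra_simps)
  hence "2 dvd (b' - bu)" using Au1 two_m by (metis dvd_add dvd_mult dvd_mult2)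
  from dvd_add[OF this bub] show "2 dvd (b' - b)" by simp
qed



lemma red_const_iff: "c \<in> {0..<2^m} \<Longrightarrow> red m a = c \<longleftrightarrow> (2::padic2)^m dvd (a - of_int c)"
  using red_eq_iff[of m a "of_int c"] red_red[of c m] by simp

lemma red_down: "k \<le> m \<Longrightarrow> red m x = red m y \<Longrightarrow> red k x = red k y"
  by (metis red_mono)

lemma dvd_pow_le: "k \<le> m \<Longrightarrow> (2::padic2)^m dvd z \<Longrightarrow> (2::padic2)^k dvd z"
  by (meson dvd_trans le_imp_power_dvd)

lemma dichotomy:
  assumes "red m z = red m u"
  shows "red (Suc m) z = red (Suc m) u \<or> red (Suc m) z = red (Suc m) (u + 2^m)"
proof -
  obtain d where d: "z - u = 2^m * d" using red_dvd[OF assms] by (auto simp: dvd_def)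
  show ?thesis
  proof (cases "(2::padic2) dvd d")
    case True
    then obtain e where "d = 2 * e" by (auto simp: dvd_def)
    hence "z - u = 2^Suc m * e" using d by simp
    thus ?thesis using dvd_red[of "Suc m" z u] by simp
  next
    case False
    then obtain e where e: "d - 1 = 2 * e" using odd_iff by (auto simp: dvd_def)
    have "z - (u + 2^m) = 2^m * (d - 1)" using d by (simp add: algebra_simps)
    hence "z - (u + 2^m) = 2^Suc m * e" using e by simp
    thus ?thesis using dvd_red[of "Suc m" z "u + 2^m"] by simp
  qed
qed

lemma per_mod:
  assumes "p \<ge> 1" "red m (poly (piter f p) x) = red m x"
  shows "red m (poly (piter f i) x) = red m (poly (piter f (i mod p)) x)"
  using per_red[OF assms(2), of "i div p" "i mod p"] by simp

lemma levelmin: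
  assumes k: "k \<ge> 1" and per: "red n (poly (piter f k) x0) = red n x0"
    and mn: "\<And>i. 0 < i \<Longrightarrow> i < k \<Longrightarrow> red n (poly (piter f i) x0) \<noteq> red n x0"
    and z: "red n z = red n x0" and e: "red n (poly (piter f i) z) = red n z"
  shows "i mod k = 0"
proof (rule ccontr)
  assume ne: "i mod k \<noteq> 0"
  have "red n (poly (piter f i) x0) = red n (poly (piter f i) z)" using red_poly z by metis
  hence "red n (poly (piter f (i mod k)) x0) = red n x0" using e z per_mod[OF k per] by simp
  thus False using mn[of "i mod k"] ne k by simp
qed

lemma lifts_sub:
  assumes p: "p \<ge> 1" and per: "red m (poly (piter f p) y) = red m y"
    and C: "C \<subseteq> range (\<lambda>i. red m (poly (piter f i) y))"
    and D: "D \<in> lifts m f C"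
  shows "\<exists>z. red (Suc m) z \<in> D \<and> red m z = red m y"
proof -
  have Dc: "is_cycle (Suc m) f D" and Ds: "D \<subseteq> {y \<in> {0..<2^Suc m}. y mod 2^m \<in> C}"
    using D by (auto simp: lifts_def)
  obtain w where w: "w \<in> D" using Dc unfolding is_cycle_def by (metis last_in_set)
  have wr: "w \<in> {0..<2^Suc m}" and wc: "w mod 2^m \<in> C" using w Ds by auto
  obtain i where i: "w mod 2^m = red m (poly (piter f i) y)" using wc C by auto
  define r where "r = i mod p"
  have rp: "r < p" using p r_def by simp
  have i': "w mod 2^m = red m (poly (piter f r) y)" using i per_mod[OF p per] r_def by simp
  define \<zeta> where "\<zeta> = (of_int w :: padic2)"
  have z1: "red (Suc m) \<zeta> = w" using red_red[OF wr] \<zeta>_def by simp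
  have z0: "red m \<zeta> = red m (poly (piter f r) y)" using i' \<zeta>_def by (simp add: red_of_int)
  define z where "z = poly (piter f (p - r)) \<zeta>"
  have "red (Suc m) z = (fmap (Suc m) f ^^ (p - r)) w" using z1 fmap_iter z_def by metis
  hence zD: "red (Suc m) z \<in> D" using cycle_closed[OF Dc w] by simp
  have "red m z = red m (poly (piter f (p - r)) (poly (piter f r) y))"
    using red_poly[OF z0] z_def by simp
  also have "\<dots> = red m (poly (piter f p) y)" using rp by (simp add: Phi_add[symmetric])
  finally show ?thesis using zD per by auto
qed

lemma cycle_vals:
  assumes m: "m \<ge> 1" and p: "p \<ge> 1"
    and Orb: "Orb = (\<lambda>i. red m (poly (piter f i) u)) ` {..<p}" "is_cycle m f Orb" "card Orb = p"
    and bu: "poly (piter f p) u - u = 2^m * Bu"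
    and odd: "\<not> (2::padic2) dvd poly (pderiv (piter f p)) u"
  shows "(2::padic2)^m dvd (a_val m f Orb - poly (pderiv (piter f p)) u)"
    "(2::padic2) dvd (b_val m f Orb - Bu)"
proof -
  define x' where "x' = rep m Orb"
  have x'Orb: "red m x' \<in> Orb" and per': "red m (poly (piter f p) x') = red m x'"
    using cycle_rep(1,2)[OF Orb(2)] Orb(3) x'_def by auto
  obtain i where i: "i < p" "red m x' = red m (poly (piter f i) u)" using x'Orb Orb(1) by auto
  obtain b' where b': "poly (piter f p) x' - x' = 2^m * b'" using b_exists[OF per'] by blast
  have av: "a_val m f Orb = poly (pderiv (piter f p)) x'" unfolding a_val_def x'_def Orb(3) ..
  have bv: "b_val m f Orb = b'" unfolding b_val_def Orb(3) x'_def[symmetric] using the_b[OF b'] .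
  show "(2::padic2)^m dvd (a_val m f Orb - poly (pderiv (piter f p)) u)"
    using inv_lemma(1)[OF m i(1) bu odd i(2) b'] av by simp
  show "(2::padic2) dvd (b_val m f Orb - Bu)"
    using inv_lemma(2)[OF m i(1) bu odd i(2) b'] bv by simp
qed



lemma red_down1: "red (Suc n) x = red (Suc n) y \<Longrightarrow> red n x = red n y"
  by (rule red_down[of n "Suc n"]) simp_all
lemma red_down2: "red (Suc (Suc n)) x = red (Suc (Suc n)) y \<Longrightarrow> red n x = red n y"
  by (rule red_down[of n "Suc (Suc n)"]) simp_all

lemma red_3_iff: "red 2 a = 3 \<longleftrightarrow> (2::padic2)^2 dvd (a - 3)"
  using red_const_iff[of 3 2 a] by simp
lemma red_1_iff: "red 2 a = 1 \<longleftrightarrow> (2::padic2)^2 dvd (a - 1)"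
  using red_const_iff[of 1 2 a] by simp
lemma red1_0_iff: "red 1 b = 0 \<longleftrightarrow> (2::padic2) dvd b"
  using red_const_iff[of 0 1 b] by simp
lemma red1_1_iff: "red 1 b = 1 \<longleftrightarrow> (2::padic2) dvd (b - 1)"
  using red_const_iff[of 1 1 b] by simp

lemma odd_of_3: assumes "(2::padic2)^2 dvd (a - 3)" shows "\<not> 2 dvd a"
proof
  assume "2 dvd a"
  obtain w where "a - 3 = 4 * w" using assms by (auto simp: dvd_def)
  hence "a = 2 * (1 + 2 * w) + 1" by (simp add: algebra_simps)
  hence "(2::padic2) dvd 1" using \<open>2 dvd a\<close> by (metis dvd_add_right_iff dvd_triv_left)
  thus False using not_two_dvd_one by simp
qed

lemma odd_of_1: assumes "(2::padic2)^2 dvd (a - 1)" shows "\<not> 2 dvd a"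
proof
  assume "2 dvd a"
  obtain w where "a - 1 = 4 * w" using assms by (auto simp: dvd_def)
  hence "a = 2 * (2 * w) + 1" by (simp add: algebra_simps)
  hence "(2::padic2) dvd 1" using \<open>2 dvd a\<close> by (metis dvd_add_right_iff dvd_triv_left)
  thus False using not_two_dvd_one by simp
qed

lemma lift_tau:
  assumes n: "n \<ge> 2" and k: "k \<ge> 1" and per0: "red n (poly (piter f k) x0) = red n x0"
    and mn: "\<And>i. 0 < i \<Longrightarrow> i < k \<Longrightarrow> red n (poly (piter f i) x0) \<noteq> red n x0"
    and sig: "\<sigma> = range (\<lambda>i. red n (poly (piter f i) x0))"
    and u: "red n u = red n x0" and bu: "poly (piter f k) u - u = 2^(Suc n) * Bu"
    and au: "(2::padic2)^2 dvd (poly (pderiv (piter f k)) u - 3)"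
    and tau: "\<tau> = (\<lambda>i. red (Suc n) (poly (piter f i) u)) ` {..<k}"
  shows "\<tau> \<in> lifts n f \<sigma>" "is_cycle (Suc n) f \<tau>" "card \<tau> = k"
    "(2::padic2)^2 dvd (a_val (Suc n) f \<tau> - 3)" "(2::padic2) dvd (b_val (Suc n) f \<tau> - Bu)"
proof -
  have per1: "red (Suc n) (poly (piter f k) u) = red (Suc n) u"
    using bu dvd_red by (metis dvd_triv_left)
  have mn1: "red (Suc n) (poly (piter f i) u) \<noteq> red (Suc n) u" if "0 < i" "i < k" for i
  proof
    assume "red (Suc n) (poly (piter f i) u) = red (Suc n) u"
    hence "red n (poly (piter f i) u) = red n u" by (rule red_down1)
    hence "i mod k = 0" using levelmin[OF k per0 mn u] by blast
    thus False using that by simp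
  qed
  show cyc: "is_cycle (Suc n) f \<tau>" and ct: "card \<tau> = k"
    using orbit_cycle[OF k per1 mn1] tau by auto
  have "\<tau> \<subseteq> {y \<in> {0..<2^Suc n}. y mod 2^n \<in> \<sigma>}"
  proof
    fix y assume "y \<in> \<tau>"
    then obtain i where y: "y = red (Suc n) (poly (piter f i) u)" using tau by auto
    have "y mod 2^n = red n (poly (piter f i) u)" using y red_mono[of n "Suc n"] by simp
    also have "\<dots> = red n (poly (piter f i) x0)" using red_poly[OF u] by blast
    finally have "y mod 2^n \<in> \<sigma>" using sig by simp
    moreover have "y \<in> {0..<2^Suc n}" using y red_range by blast
    ultimately show "y \<in> {y \<in> {0..<2^Suc n}. y mod 2^n \<in> \<sigma>}" by blast
  qed
  thus "\<tau> \<in> lifts n f \<sigma>" using cyc by (simp add: lifts_def)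
  have odd: "\<not> 2 dvd poly (pderiv (piter f k)) u" using odd_of_3[OF au] .
  have m1: "Suc n \<ge> 1" by simp
  note cv = cycle_vals[OF m1 k tau cyc ct bu odd]
  have "(2::padic2)^2 dvd (a_val (Suc n) f \<tau> - poly (pderiv (piter f k)) u)"
    using dvd_pow_le[OF _ cv(1), of 2] n by simp
  from dvd_add[OF this au] show "(2::padic2)^2 dvd (a_val (Suc n) f \<tau> - 3)" by simp
  show "(2::padic2) dvd (b_val (Suc n) f \<tau> - Bu)" using cv(2) .
qed



lemma lift_rho:
  assumes n: "n \<ge> 2" and k: "k \<ge> 1" and per0: "red n (poly (piter f k) x0) = red n x0"
    and mn: "\<And>i. 0 < i \<Longrightarrow> i < k \<Longrightarrow> red n (poly (piter f i) x0) \<noteq> red n x0"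
    and u: "red n u = red n x0" and bu: "poly (piter f k) u - u = 2^(Suc n) * Bu"
    and oddB: "\<not> (2::padic2) dvd Bu"
    and au: "(2::padic2)^2 dvd (poly (pderiv (piter f k)) u - 3)"
    and tau: "\<tau> = (\<lambda>i. red (Suc n) (poly (piter f i) u)) ` {..<k}"
    and cyc: "is_cycle (Suc n) f \<tau>"
  shows "\<exists>\<rho>. lifts (Suc n) f \<tau> = {\<rho>} \<and> strongly_splits (Suc (Suc n)) f \<rho>"
proof -
  define Ao where "Ao = poly (pderiv (piter f k)) u"
  obtain w where w: "Ao - 3 = 4 * w" using au Ao_def by (auto simp: dvd_def)
  define h where "h = (2::padic2)^(Suc n) * Bu"
  have Fu: "poly (piter f k) u = u + h" using bu h_def by (simp add: algebra_simps)
  obtain c where c: "poly (piter f k) (u + h) = poly (piter f k) u + h * Ao + h^2 * c"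
    using taylor[of "piter f k" u h] Ao_def by blast
  have F2: "poly (piter f (k + k)) u = poly (piter f k) (u + h)" using Fu by (simp add: Phi_add)
  define Br where "Br = 2 * Bu * (w + 1) + 2^n * Bu^2 * c"
  have Ao': "Ao = 3 + 4 * w" using w by (simp add: algebra_simps)
  have br: "poly (piter f (2 * k)) u - u = 2^(Suc (Suc n)) * Br"
  proof -
    have "poly (piter f (2 * k)) u - u = h + h * Ao + h^2 * c"
      using F2 c Fu by (simp add: mult_2)
    also have "\<dots> = 2^(Suc (Suc n)) * Br"
      unfolding h_def Br_def Ao' by (simp add: algebra_simps power2_eq_square power_mult_distrib)
    finally show ?thesis .
  qed
  have two_n: "(2::padic2) dvd 2^n" using two_dvd_pow n by simp
  have evBr: "2 dvd Br" unfolding Br_def using two_n by (metis dvd_add dvd_mult dvd_mult2 dvd_triv_left)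
  have k2: "2 * k \<ge> 1" using k by simp
  have per2: "red (Suc (Suc n)) (poly (piter f (2 * k)) u) = red (Suc (Suc n)) u"
    using br dvd_red by (metis dvd_triv_left)
  have per1: "red (Suc n) (poly (piter f k) u) = red (Suc n) u"
    using bu dvd_red by (metis dvd_triv_left)
  have mn2: "red (Suc (Suc n)) (poly (piter f i) u) \<noteq> red (Suc (Suc n)) u" if "0 < i" "i < 2 * k" for i
  proof
    assume e: "red (Suc (Suc n)) (poly (piter f i) u) = red (Suc (Suc n)) u"
    hence "red n (poly (piter f i) u) = red n u" by (rule red_down2)
    hence "i mod k = 0" using levelmin[OF k per0 mn u] by blast
    then obtain q where q: "i = k * q" by auto
    have "q \<ge> 1" using q that by (cases q) auto
    moreover have "k * q < k * 2" using q that by simp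
    hence "q < 2" by simp
    ultimately have "i = k" using q by simp
    hence "(2::padic2)^(Suc (Suc n)) dvd (poly (piter f k) u - u)" using e red_dvd by blast
    hence "(2::padic2)^(Suc (Suc n)) dvd 2^(Suc n) * Bu" using bu by simp
    hence "2 dvd Bu" using dvd_shift by blast
    thus False using oddB by simp
  qed
  define \<rho> where "\<rho> = (\<lambda>i. red (Suc (Suc n)) (poly (piter f i) u)) ` {..<2 * k}"
  have cycr: "is_cycle (Suc (Suc n)) f \<rho>" and cr: "card \<rho> = 2 * k"
    using orbit_cycle[OF k2 per2 mn2] \<rho>_def by auto
  define DA where "DA = poly (pderiv (piter f (2 * k))) u"
  have DA: "DA = poly (pderiv (piter f k)) (poly (piter f k) u) * Ao"
    unfolding DA_def Ao_def using D_add[of f k k u] by (simp add: mult_2)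
  have "(2::padic2)^(Suc n) dvd (poly (pderiv (piter f k)) (poly (piter f k) u) - Ao)"
    unfolding Ao_def by (rule poly_cong) (use bu in simp)
  hence "(2::padic2)^2 dvd (poly (pderiv (piter f k)) (poly (piter f k) u) - Ao)"
    using dvd_pow_le[of 2 "Suc n"] n by simp
  then obtain e where e: "poly (pderiv (piter f k)) (poly (piter f k) u) = Ao + 4 * e"
    by (auto simp: dvd_def algebra_simps)
  have "DA - 1 = (2::padic2)^2 * (2 + 6 * w + 4 * w^2 + e * (3 + 4 * w))"
    unfolding DA e Ao' by (simp add: algebra_simps power2_eq_square)
  hence DA1: "(2::padic2)^2 dvd (DA - 1)" by (rule dvdI)
  have oddDA: "\<not> 2 dvd DA" using odd_of_1[OF DA1] .
  have m2: "Suc (Suc n) \<ge> 1" by simp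
  note cv = cycle_vals[OF m2 k2 \<rho>_def cycr cr br oddDA[unfolded DA_def]]
  have "(2::padic2)^2 dvd (a_val (Suc (Suc n)) f \<rho> - DA)"
    using dvd_pow_le[OF _ cv(1), of 2] DA_def by simp
  from dvd_add[OF this DA1] have a1: "(2::padic2)^2 dvd (a_val (Suc (Suc n)) f \<rho> - 1)" by simp
  have "2 dvd b_val (Suc (Suc n)) f \<rho>" using dvd_add[OF cv(2) evBr] by simp
  hence ss: "strongly_splits (Suc (Suc n)) f \<rho>"
    unfolding strongly_splits_def using a1 red_1_iff red1_0_iff by blast
  have rin: "\<rho> \<in> lifts (Suc n) f \<tau>"
  proof -
    have "\<rho> \<subseteq> {y \<in> {0..<2^Suc (Suc n)}. y mod 2^Suc n \<in> \<tau>}"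
    proof
      fix y assume "y \<in> \<rho>"
      then obtain i where y: "y = red (Suc (Suc n)) (poly (piter f i) u)" using \<rho>_def by auto
      have "y mod 2^Suc n = red (Suc n) (poly (piter f i) u)" using y red_mono[of "Suc n" "Suc (Suc n)"] by simp
      also have "\<dots> = red (Suc n) (poly (piter f (i mod k)) u)" using per_mod[OF k per1] by blast
      finally have "y mod 2^Suc n \<in> \<tau>" using tau k by simp
      moreover have "y \<in> {0..<2^Suc (Suc n)}" using y red_range by blast
      ultimately show "y \<in> {y \<in> {0..<2^Suc (Suc n)}. y mod 2^Suc n \<in> \<tau>}" by blast
    qed
    thus ?thesis using cycr by (simp add: lifts_def)
  qed
  have "lifts (Suc n) f \<tau> \<subseteq> {\<rho>}"
  proof
    fix D assume D: "D \<in> lifts (Suc n) f \<tau>"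
    have Dc: "is_cycle (Suc (Suc n)) f D" using D by (simp add: lifts_def)
    have tr: "\<tau> \<subseteq> range (\<lambda>i. red (Suc n) (poly (piter f i) u))" using tau by auto
    obtain z where z: "red (Suc (Suc n)) z \<in> D" "red (Suc n) z = red (Suc n) u"
      using lifts_sub[OF k per1 tr D] by blast
    have r0: "red (Suc (Suc n)) u \<in> \<rho>"
    proof -
      have "red (Suc (Suc n)) (poly (piter f 0) u) \<in> \<rho>" unfolding \<rho>_def
        by (rule imageI) (use k in simp)
      thus ?thesis by simp
    qed
    have rk: "red (Suc (Suc n)) (u + 2^Suc n) \<in> \<rho>"
    proof -
      obtain v where v: "Bu - 1 = 2 * v" using oddB odd_iff by (auto simp: dvd_def)
      have "poly (piter f k) u - (u + 2^Suc n) = 2^(Suc n) * (Bu - 1)" using bu by (simp add: algebra_simps)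
      also have "\<dots> = 2^(Suc (Suc n)) * v" using v by simp
      finally have "red (Suc (Suc n)) (poly (piter f k) u) = red (Suc (Suc n)) (u + 2^Suc n)"
        using dvd_red by (metis dvd_triv_left)
      moreover have "red (Suc (Suc n)) (poly (piter f k) u) \<in> \<rho>" unfolding \<rho>_def
        by (rule imageI) (use k in simp)
      ultimately show ?thesis by simp
    qed
    have "red (Suc (Suc n)) z \<in> \<rho>" using dichotomy[OF z(2)] r0 rk by auto
    thus "D \<in> {\<rho>}" using cycle_share[OF Dc cycr z(1)] by simp
  qed
  hence "lifts (Suc n) f \<tau> = {\<rho>}" using rin by blast
  thus ?thesis using ss by blast
qed



lemma final_step:
  assumes n: "n \<ge> 2" and k: "k \<ge> 1" and per0: "red n (poly (piter f k) x0) = red n x0"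
    and mn: "\<And>i. 0 < i \<Longrightarrow> i < k \<Longrightarrow> red n (poly (piter f i) x0) \<noteq> red n x0"
    and sig: "\<sigma> = range (\<lambda>i. red n (poly (piter f i) x0))"
    and ue: "red n ue = red n x0" and be: "poly (piter f k) ue - ue = 2^(Suc n) * Be"
    and ae: "(2::padic2)^2 dvd (poly (pderiv (piter f k)) ue - 3)" and evB: "2 dvd Be"
    and uo: "red n uo = red n x0" and bo: "poly (piter f k) uo - uo = 2^(Suc n) * Bo"
    and ao: "(2::padic2)^2 dvd (poly (pderiv (piter f k)) uo - 3)" and odB: "\<not> 2 dvd Bo"
    and dich: "\<And>z. red n z = red n x0 \<Longrightarrow> red (Suc n) z = red (Suc n) ue \<or> red (Suc n) z = red (Suc n) uo"
    and neq: "red (Suc n) ue \<noteq> red (Suc n) uo"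
  shows "\<exists>\<tau>1 \<tau>2. \<tau>1 \<noteq> \<tau>2 \<and> lifts n f \<sigma> = {\<tau>1, \<tau>2} \<and>
           weakly_splits (Suc n) f \<tau>1 \<and> weakly_grows (Suc n) f \<tau>2 \<and>
           (\<exists>\<rho>. lifts (Suc n) f \<tau>2 = {\<rho>} \<and> strongly_splits (Suc (Suc n)) f \<rho>)"
proof -
  define te where "te = (\<lambda>i. red (Suc n) (poly (piter f i) ue)) ` {..<k}"
  define to where "to = (\<lambda>i. red (Suc n) (poly (piter f i) uo)) ` {..<k}"
  note le = lift_tau[OF n k per0 mn sig ue be ae te_def]
  note lo = lift_tau[OF n k per0 mn sig uo bo ao to_def]
  have ws: "weakly_splits (Suc n) f te"
    unfolding weakly_splits_def red_3_iff red1_0_iff using le(4) dvd_add[OF le(5) evB] by simp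
  have "2 dvd (Bo - 1)" using odB odd_iff by blast
  hence wg: "weakly_grows (Suc n) f to"
    unfolding weakly_grows_def red_3_iff red1_1_iff using lo(4) dvd_add[OF lo(5)] by fastforce
  have rho: "\<exists>\<rho>. lifts (Suc n) f to = {\<rho>} \<and> strongly_splits (Suc (Suc n)) f \<rho>"
    by (rule lift_rho[OF n k per0 mn uo bo odB ao to_def lo(2)])
  have ue_te: "red (Suc n) ue \<in> te"
  proof -
    have "red (Suc n) (poly (piter f 0) ue) \<in> te" unfolding te_def by (rule imageI) (use k in simp)
    thus ?thesis by simp
  qed
  have uo_to: "red (Suc n) uo \<in> to"
  proof -
    have "red (Suc n) (poly (piter f 0) uo) \<in> to" unfolding to_def by (rule imageI) (use k in simp)
    thus ?thesis by simp
  qed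
  have dist: "te \<noteq> to"
  proof
    assume "te = to"
    hence "red (Suc n) ue \<in> to" using ue_te by simp
    then obtain i where i: "i < k" "red (Suc n) ue = red (Suc n) (poly (piter f i) uo)" using to_def by auto
    hence "red n (poly (piter f i) uo) = red n uo" using red_down1 ue uo by metis
    hence "i mod k = 0" using levelmin[OF k per0 mn uo] by blast
    hence "i = 0" using i by simp
    thus False using i neq by simp
  qed
  have "lifts n f \<sigma> \<subseteq> {te, to}"
  proof
    fix D assume D: "D \<in> lifts n f \<sigma>"
    have Dc: "is_cycle (Suc n) f D" using D by (simp add: lifts_def)
    obtain z where z: "red (Suc n) z \<in> D" "red n z = red n x0"
      using lifts_sub[OF k per0 _ D] sig by blast
    from dich[OF z(2)] show "D \<in> {te, to}"
    proof
      assume "red (Suc n) z = red (Suc n) ue"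
      hence "D = te" using cycle_share[OF Dc le(2) z(1)] ue_te by simp
      thus ?thesis by simp
    next
      assume "red (Suc n) z = red (Suc n) uo"
      hence "D = to" using cycle_share[OF Dc lo(2) z(1)] uo_to by simp
      thus ?thesis by simp
    qed
  qed
  hence "lifts n f \<sigma> = {te, to}" using le(1) lo(1) by blast
  thus ?thesis using dist ws wg rho by blast
qed

theorem proposition3p3:
  fixes f :: "padic2 poly" and n :: nat and \<sigma> :: "int set"
  assumes "n \<ge> 2" and "is_cycle n f \<sigma>" and "weakly_splits n f \<sigma>"
  shows "\<exists>\<tau>1 \<tau>2. \<tau>1 \<noteq> \<tau>2 \<and> lifts n f \<sigma> = {\<tau>1, \<tau>2} \<and>
           weakly_splits (Suc n) f \<tau>1 \<and> weakly_grows (Suc n) f \<tau>2 \<and>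
           (\<exists>\<rho>. lifts (Suc n) f \<tau>2 = {\<rho>} \<and> strongly_splits (Suc (Suc n)) f \<rho>)"
proof -
  note n = assms(1)
  define x0 where "x0 = rep n \<sigma>"
  define k where "k = card \<sigma>"
  note cr = cycle_rep[OF assms(2), folded x0_def k_def]
  have k: "k \<ge> 1" using cr(5) .
  note per0 = cr(2) and mn = cr(3) and sig = cr(4)
  define A where "A = poly (pderiv (piter f k)) x0"
  obtain B where B: "poly (piter f k) x0 - x0 = 2^n * B" using b_exists[OF per0] by blast
  have av: "a_val n f \<sigma> = A" unfolding a_val_def A_def x0_def k_def ..
  have bv: "b_val n f \<sigma> = B" unfolding b_val_def using the_b[OF B[unfolded x0_def k_def]] .
  have A3: "(2::padic2)^2 dvd (A - 3)" and B2: "2 dvd B"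
    using assms(3) unfolding weakly_splits_def av bv red_3_iff red1_0_iff by auto
  obtain w where w: "A - 3 = 4 * w" using A3 by (auto simp: dvd_def)
  obtain B' where B': "B = 2 * B'" using B2 by (auto simp: dvd_def)
  obtain n' where n': "n = Suc n'" "n' \<ge> 1" using n by (cases n) auto
  define x1 where "x1 = x0 + 2^n"
  obtain c where c: "poly (piter f k) (x0 + 2^n) = poly (piter f k) x0 + 2^n * A + (2^n)^2 * c"
    using taylor[of "piter f k" x0 "2^n"] A_def by blast
  define B1 where "B1 = B' + 1 + 2 * w + 2^n' * c"
  have b0: "poly (piter f k) x0 - x0 = 2^(Suc n) * B'" using B B' by simp
  have A': "A = 3 + 4 * w" using w by (simp add: algebra_simps)
  have b1: "poly (piter f k) x1 - x1 = 2^(Suc n) * B1"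
  proof -
    have "poly (piter f k) x1 - x1 = (poly (piter f k) x0 - x0) + 2^n * A + (2^n)^2 * c - 2^n"
      unfolding x1_def c by (simp add: algebra_simps)
    also have "\<dots> = 2^(Suc n) * B1"
      unfolding B B' A' B1_def n'(1) by (simp add: algebra_simps power2_eq_square)
    finally show ?thesis .
  qed
  have d10: "(2::padic2)^n dvd (x1 - x0)" unfolding x1_def by simp
  have r10: "red n x1 = red n x0" using dvd_red[OF d10] .
  have "(2::padic2)^n dvd (poly (pderiv (piter f k)) x1 - A)" unfolding A_def using d10 by (rule poly_cong)
  hence "(2::padic2)^2 dvd (poly (pderiv (piter f k)) x1 - A)" using dvd_pow_le[of 2 n] n by simp
  from dvd_add[OF this A3] have A13: "(2::padic2)^2 dvd (poly (pderiv (piter f k)) x1 - 3)" by simp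
  have A03: "(2::padic2)^2 dvd (poly (pderiv (piter f k)) x0 - 3)" using A3 A_def by simp
  have two_n': "(2::padic2) dvd 2^n'" using two_dvd_pow n'(2) by simp
  have "B1 - B' - 1 = 2 * w + 2^n' * c" unfolding B1_def by (simp add: algebra_simps)
  hence par: "2 dvd (B1 - B' - 1)" using two_n' by (metis dvd_add dvd_mult2 dvd_triv_left)
  have par1: "2 dvd B' \<longleftrightarrow> \<not> 2 dvd B1"
  proof
    assume "2 dvd B'"
    hence "2 dvd (B1 - 1)" using dvd_add[OF par] by fastforce
    thus "\<not> 2 dvd B1" using odd_iff by blast
  next
    assume "\<not> 2 dvd B1"
    hence "2 dvd (B1 - 1)" using odd_iff by blast
    from dvd_diff[OF this par] show "2 dvd B'" by simp
  qed
  have neq: "red (Suc n) x0 \<noteq> red (Suc n) x1"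
  proof
    assume "red (Suc n) x0 = red (Suc n) x1"
    hence "(2::padic2)^(Suc n) dvd (x1 - x0)" using red_dvd by metis
    hence "(2::padic2)^(Suc n) dvd 2^n * 1" unfolding x1_def by simp
    hence "(2::padic2) dvd 1" using dvd_shift by blast
    thus False using not_two_dvd_one by simp
  qed
  have dich: "red (Suc n) z = red (Suc n) x0 \<or> red (Suc n) z = red (Suc n) x1" if "red n z = red n x0" for z
    using dichotomy[OF that] x1_def by simp
  have r00: "red n x0 = red n x0" ..
  show ?thesis
  proof (cases "2 dvd B'")
    case True
    hence "\<not> 2 dvd B1" using par1 by blast
    show ?thesis
      by (rule final_step[OF n k per0 mn sig r00 b0 A03 True r10 b1 A13 \<open>\<not> 2 dvd B1\<close> dich neq])
  next
    case False
    hence "2 dvd B1" using par1 by blast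
    show ?thesis
      by (rule final_step[OF n k per0 mn sig r10 b1 A13 \<open>2 dvd B1\<close> r00 b0 A03 False])
         (use dich neq in auto)
  qed
qed


end
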